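(* Let $0<b<1$, an integer $0\le m\le n-1$, and $\beta>n-\frac m2$. Let $G:=\{\mathbf x\in\mathbb R^n:x_{m+1}=\dots=x_n=0\}$, $E:=\big((-1,1)^m\times\mathcal B^{n-m}_1(\mathbf 0)\big)\setminus G$, and define $\Psi:E\rightrightarrows E$ by $\Psi(\mathbf x):=E\cap\mathcal B_{d_G(\mathbf x)}(\mathbf x)\cap\mathcal A_{b\,d_G(\mathbf x)}(G)$. If $\gamma:E\to[0,\infty)$ is measurable and $1\le d_G^\beta\gamma\le K_3$ on $E$ for some $K_3<\infty$, then there is a constant $K_4'$ depending only on $n-m$ such that $$\int_{\Psi^{-1}(\mathbf y)}\frac{\gamma(\mathbf x)}{|\Psi(\mathbf x)|}\,d\mathbf x\le n\,2^{3m/2}K_3K_4'\frac{b^{\beta+\frac m2-n}}{(1-b)^{n-m-1}}\gamma(\mathbf y)\quad\text{for all }\mathbf y\in E.$$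
   Context: $d_G$ is the distance to $G$; $\mathcal B_r(\mathbf x)$ is the open ball of radius $r$ centered at $\mathbf x$ and $\mathcal B^{n-m}_1(\mathbf 0)$ the unit ball in $\mathbb R^{n-m}$; $\mathcal A_r(G):=\{\mathbf x:0<d_G(\mathbf x)<r\}$; $\Psi^{-1}(\mathbf y):=\{\mathbf x\in E:\mathbf y\in\Psi(\mathbf x)\}$. *)

theory Defs
  imports "HOL-Analysis.Analysis"
begin

text \<open>Points of R^n are represented as functions nat => real restricted to the
  index set {..<n} (coordinates x_1..x_n are x 0 .. x (n-1)); this lets the
  dimension n be quantified inside the statement.\<close>

definition Rn :: "nat \<Rightarrow> (nat \<Rightarrow> real) set" where
  "Rn n = PiE {..<n} (\<lambda>_. UNIV)"

definition Leb :: "nat \<Rightarrow> (nat \<Rightarrow> real) measure" where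
  "Leb n = completion (PiM {..<n} (\<lambda>_. lborel))"

definition edist :: "nat \<Rightarrow> (nat \<Rightarrow> real) \<Rightarrow> (nat \<Rightarrow> real) \<Rightarrow> real" where
  "edist n x y = sqrt (\<Sum>i<n. (x i - y i)^2)"

definition distset :: "nat \<Rightarrow> (nat \<Rightarrow> real) set \<Rightarrow> (nat \<Rightarrow> real) \<Rightarrow> real" where
  "distset n S x = Inf {edist n x y | y. y \<in> S}"

definition oball :: "nat \<Rightarrow> (nat \<Rightarrow> real) \<Rightarrow> real \<Rightarrow> (nat \<Rightarrow> real) set" where
  "oball n x r = {y \<in> Rn n. edist n x y < r}"

definition annul :: "nat \<Rightarrow> (nat \<Rightarrow> real) set \<Rightarrow> real \<Rightarrow> (nat \<Rightarrow> real) set" where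
  "annul n S r = {x \<in> Rn n. 0 < distset n S x \<and> distset n S x < r}"

definition Gset :: "nat \<Rightarrow> nat \<Rightarrow> (nat \<Rightarrow> real) set" where
  "Gset n m = {x \<in> Rn n. \<forall>i\<in>{m..<n}. x i = 0}"

definition dG :: "nat \<Rightarrow> nat \<Rightarrow> (nat \<Rightarrow> real) \<Rightarrow> real" where
  "dG n m x = distset n (Gset n m) x"

definition Eset :: "nat \<Rightarrow> nat \<Rightarrow> (nat \<Rightarrow> real) set" where
  "Eset n m = {x \<in> Rn n. (\<forall>i<m. -1 < x i \<and> x i < 1) \<and>
                 sqrt (\<Sum>i\<in>{m..<n}. (x i)^2) < 1} - Gset n m"

definition Psi :: "nat \<Rightarrow> nat \<Rightarrow> real \<Rightarrow> (nat \<Rightarrow> real) \<Rightarrow> (nat \<Rightarrow> real) set" where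
  "Psi n m b x = Eset n m \<inter> oball n x (dG n m x) \<inter> annul n (Gset n m) (b * dG n m x)"

definition Psi_inv :: "nat \<Rightarrow> nat \<Rightarrow> real \<Rightarrow> (nat \<Rightarrow> real) \<Rightarrow> (nat \<Rightarrow> real) set" where
  "Psi_inv n m b y = {x \<in> Eset n m. y \<in> Psi n m b x}"

end

theory Submission
  imports Defs "HOL-Analysis.Ball_Volume"
begin

lemma lborel_affine_preimage:
  fixes a c :: real
  assumes "a \<noteq> 0" "A \<in> sets borel"
  shows "emeasure lborel A = ennreal \<bar>a\<bar> * emeasure lborel {x. c + a * x \<in> A}"
proof -
  have "emeasure lborel A = emeasure (density (distr lborel borel (\<lambda>x. c + a * x)) (\<lambda>_. ennreal \<bar>a\<bar>)) A"
    using lborel_real_affine[OF assms(1), of c] by simp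
  also have "\<dots> = ennreal \<bar>a\<bar> * emeasure (distr lborel borel (\<lambda>x. c + a * x)) A"
    using assms by (simp add: emeasure_density_const)
  also have "\<dots> = ennreal \<bar>a\<bar> * emeasure lborel {x. c + a * x \<in> A}"
    using assms by (subst emeasure_distr) (auto simp: vimage_def)
  finally show ?thesis .
qed

lemma PiM_affine:
  fixes I :: "nat set" and a c :: "nat \<Rightarrow> real"
  assumes fin: "finite I" and a: "\<And>i. i \<in> I \<Longrightarrow> a i \<noteq> 0"
    and S: "S \<in> sets (PiM I (\<lambda>_. lborel))"
  shows "emeasure (PiM I (\<lambda>_. lborel)) S = (\<Prod>i\<in>I. ennreal \<bar>a i\<bar>) *
     emeasure (PiM I (\<lambda>_. lborel)) ((\<lambda>u. \<lambda>i\<in>I. c i + a i * u i) -` S \<inter> space (PiM I (\<lambda>_. lborel)))"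
proof -
  interpret product_sigma_finite "\<lambda>_. lborel :: real measure" by standard
  define T where "T = (\<lambda>u::nat\<Rightarrow>real. \<lambda>i\<in>I. c i + a i * u i)"
  have Tm: "T \<in> measurable (PiM I (\<lambda>_. lborel)) (PiM I (\<lambda>_. lborel))"
    unfolding T_def by measurable
  define P where "P = scale_measure (\<Prod>i\<in>I. ennreal \<bar>a i\<bar>) (distr (PiM I (\<lambda>_. lborel)) (PiM I (\<lambda>_. lborel)) T)"
  have "P = PiM I (\<lambda>_. lborel)"
  proof (rule PiM_eqI[OF fin])
    show "sets P = sets (PiM I (\<lambda>_. lborel))" by (simp add: P_def)
    fix A :: "nat \<Rightarrow> real set" assume A: "\<And>i. i \<in> I \<Longrightarrow> A i \<in> sets lborel"
    have pre: "T -` Pi\<^sub>E I A \<inter> space (PiM I (\<lambda>_. lborel)) = Pi\<^sub>E I (\<lambda>i. {x. c i + a i * x \<in> A i})"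
      by (auto simp: T_def space_PiM PiE_iff extensional_def)
    have "emeasure P (Pi\<^sub>E I A) = (\<Prod>i\<in>I. ennreal \<bar>a i\<bar>) * emeasure (PiM I (\<lambda>_. lborel)) (T -` Pi\<^sub>E I A \<inter> space (PiM I (\<lambda>_. lborel)))"
      unfolding P_def using A by (subst emeasure_scale_measure, subst emeasure_distr[OF Tm]) (auto intro!: sets_PiM_I_finite fin)
    also have "\<dots> = (\<Prod>i\<in>I. ennreal \<bar>a i\<bar>) * (\<Prod>i\<in>I. emeasure lborel {x. c i + a i * x \<in> A i})"
      unfolding pre using A by (subst emeasure_PiM[OF fin]) auto
    also have "\<dots> = (\<Prod>i\<in>I. ennreal \<bar>a i\<bar> * emeasure lborel {x. c i + a i * x \<in> A i})"
      by (simp add: prod.distrib)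
    also have "\<dots> = (\<Prod>i\<in>I. emeasure lborel (A i))"
      using A a by (intro prod.cong refl lborel_affine_preimage[symmetric]) auto
    finally show "emeasure P (Pi\<^sub>E I A) = (\<Prod>i\<in>I. emeasure lborel (A i))" .
  qed
  then have "emeasure (PiM I (\<lambda>_. lborel)) S = emeasure P S" by simp
  also have "\<dots> = (\<Prod>i\<in>I. ennreal \<bar>a i\<bar>) * emeasure (PiM I (\<lambda>_. lborel)) (T -` S \<inter> space (PiM I (\<lambda>_. lborel)))"
    unfolding P_def using S by (simp add: emeasure_distr[OF Tm])
  finally show ?thesis unfolding T_def .
qed

abbreviation LB :: "nat \<Rightarrow> (nat \<Rightarrow> real) measure" where
  "LB m \<equiv> PiM {..<m} (\<lambda>_. lborel)"

definition cb :: "nat \<Rightarrow> (nat \<Rightarrow> real) \<Rightarrow> real \<Rightarrow> (nat \<Rightarrow> real) set" where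
  "cb m c r = {u \<in> Rn m. (\<Sum>i<m. (u i - c i)^2) \<le> r^2}"

definition orth :: "nat \<Rightarrow> (nat \<Rightarrow> real) \<Rightarrow> (nat \<Rightarrow> real) \<Rightarrow> (nat \<Rightarrow> real) set" where
  "orth m c s = {u \<in> Rn m. \<forall>i<m. 0 \<le> s i * (u i - c i)}"

lemma space_LB: "space (LB m) = Rn m"
  by (simp add: space_PiM Rn_def)

lemma cb_sets[measurable]: "cb m c r \<in> sets (LB m)"
proof -
  have "cb m c r = {u \<in> space (LB m). (\<Sum>i<m. (u i - c i)^2) \<le> r^2}"
    by (simp add: cb_def space_LB)
  also have "\<dots> \<in> sets (LB m)" by measurable
  finally show ?thesis .
qed

lemma orth_sets[measurable]: "orth m c s \<in> sets (LB m)"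
proof -
  have "orth m c s = (\<Inter>i<m. {u \<in> space (LB m). 0 \<le> s i * (u i - c i)}) \<inter> space (LB m)"
    by (auto simp: orth_def space_LB)
  also have "\<dots> \<in> sets (LB m)" by measurable
  finally show ?thesis .
qed

lemma emeasure_cb01: "emeasure (LB m) (cb m (\<lambda>_. 0) 1) = ennreal (unit_ball_vol (real m))"
proof -
  have "cb m (\<lambda>_. 0) 1 = {f. sqrt (\<Sum>i\<in>{..<m}. (f i)\<^sup>2) \<le> 1} \<inter> space (LB m)"
    by (auto simp: cb_def space_LB)
  then show ?thesis using emeasure_cball_aux[of "{..<m}" 1] by simp
qed

lemma emeasure_cb_orth:
  assumes r: "r > 0" and s: "\<And>i. i < m \<Longrightarrow> s i = 1 \<or> s i = -1"
  shows "emeasure (LB m) (cb m c r \<inter> orth m c s) = ennreal (r ^ m) * emeasure (LB m) (cb m (\<lambda>_. 0) 1 \<inter> orth m (\<lambda>_. 0) (\<lambda>_. 1))"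
proof -
  have "emeasure (LB m) (cb m c r \<inter> orth m c s) = (\<Prod>i\<in>{..<m}. ennreal \<bar>r * s i\<bar>) *
     emeasure (LB m) ((\<lambda>u. \<lambda>i\<in>{..<m}. c i + (r * s i) * u i) -` (cb m c r \<inter> orth m c s) \<inter> space (LB m))"
    using r s by (intro PiM_affine) (auto, fastforce+)
  also have "(\<Prod>i\<in>{..<m}. ennreal \<bar>r * s i\<bar>) = ennreal (r ^ m)"
  proof -
    have "(\<Prod>i\<in>{..<m}. ennreal \<bar>r * s i\<bar>) = (\<Prod>i\<in>{..<m}. ennreal r)"
      using s r by (intro prod.cong refl) (auto simp: abs_mult, fastforce)
    then show ?thesis using r by (simp add: ennreal_power)
  qed
  also have "(\<lambda>u. \<lambda>i\<in>{..<m}. c i + (r * s i) * u i) -` (cb m c r \<inter> orth m c s) \<inter> space (LB m) = cb m (\<lambda>_. 0) 1 \<inter> orth m (\<lambda>_. 0) (\<lambda>_. 1)"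
  proof -
    have sq: "(r * s i * u i)^2 = r^2 * (u i)^2" if "i < m" for i u
      using s[OF that] by (auto simp: power_mult_distrib)
    have sgn: "0 \<le> s i * (r * s i * u i) \<longleftrightarrow> 0 \<le> u i" if "i < m" for i u
      using s[OF that] r by (auto simp: zero_le_mult_iff)
    have "(\<Sum>i<m. (r * s i * u i)^2) = r^2 * (\<Sum>i<m. (u i)^2)" for u
      by (simp add: sq sum_distrib_left)
    moreover have "r^2 * x \<le> r^2 \<longleftrightarrow> x \<le> 1" for x using r by simp
    ultimately show ?thesis using sgn
      by (auto simp: cb_def orth_def space_LB Rn_def PiE_iff extensional_def)
  qed
  finally show ?thesis .
qed

lemma emeasure_cb:
  assumes r: "r > 0"
  shows "emeasure (LB m) (cb m c r) = ennreal (r ^ m * unit_ball_vol (real m))"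
proof -
  have "cb m c r = cb m c r \<inter> orth m c (\<lambda>_. 0)" by (auto simp: cb_def orth_def)
  have "emeasure (LB m) (cb m c r) = (\<Prod>i\<in>{..<m}. ennreal \<bar>r\<bar>) *
     emeasure (LB m) ((\<lambda>u. \<lambda>i\<in>{..<m}. c i + r * u i) -` (cb m c r) \<inter> space (LB m))"
    using r by (intro PiM_affine) auto
  also have "(\<Prod>i\<in>{..<m}. ennreal \<bar>r\<bar>) = ennreal (r ^ m)"
    using r by (simp add: ennreal_power)
  also have "(\<lambda>u. \<lambda>i\<in>{..<m}. c i + r * u i) -` (cb m c r) \<inter> space (LB m) = cb m (\<lambda>_. 0) 1"
  proof -
    have "(\<Sum>i<m. (r * u i)^2) = r^2 * (\<Sum>i<m. (u i)^2)" for u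
      by (simp add: power_mult_distrib sum_distrib_left)
    moreover have "r^2 * x \<le> r^2 \<longleftrightarrow> x \<le> 1" for x using r by simp
    ultimately show ?thesis
      by (auto simp: cb_def space_LB Rn_def PiE_iff extensional_def)
  qed
  finally show ?thesis using r by (simp add: emeasure_cb01 ennreal_mult)
qed

lemma cb_orth_cover:
  "emeasure (LB m) (cb m (\<lambda>_. 0) 1) \<le> 2 ^ m * emeasure (LB m) (cb m (\<lambda>_. 0) 1 \<inter> orth m (\<lambda>_. 0) (\<lambda>_. 1))"
proof -
  define S where "S = PiE {..<m} (\<lambda>_. {1::real, -1})"
  have finS: "finite S" by (simp add: S_def finite_PiE)
  have cardS: "card S = 2 ^ m" by (simp add: S_def card_PiE numeral_2_eq_2)
  have sub: "cb m (\<lambda>_. 0) 1 \<subseteq> (\<Union>s\<in>S. cb m (\<lambda>_. 0) 1 \<inter> orth m (\<lambda>_. 0) s)"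
  proof
    fix u assume u: "u \<in> cb m (\<lambda>_. 0) 1"
    define s where "s = (\<lambda>i\<in>{..<m}. if 0 \<le> u i then 1 else (-1::real))"
    have "s \<in> S" by (auto simp: s_def S_def)
    moreover have "u \<in> orth m (\<lambda>_. 0) s" using u by (auto simp: orth_def cb_def s_def)
    ultimately show "u \<in> (\<Union>s\<in>S. cb m (\<lambda>_. 0) 1 \<inter> orth m (\<lambda>_. 0) s)" using u by auto
  qed
  have "emeasure (LB m) (cb m (\<lambda>_. 0) 1) \<le> emeasure (LB m) (\<Union>s\<in>S. cb m (\<lambda>_. 0) 1 \<inter> orth m (\<lambda>_. 0) s)"
    by (intro emeasure_mono sub) (auto intro!: sets.finite_UN finS)
  also have "\<dots> \<le> (\<Sum>s\<in>S. emeasure (LB m) (cb m (\<lambda>_. 0) 1 \<inter> orth m (\<lambda>_. 0) s))"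
    by (intro emeasure_subadditive_finite finS) auto
  also have "\<dots> = (\<Sum>s\<in>S. emeasure (LB m) (cb m (\<lambda>_. 0) 1 \<inter> orth m (\<lambda>_. 0) (\<lambda>_. 1)))"
  proof (intro sum.cong refl)
    fix s assume "s \<in> S"
    then have "\<And>i. i < m \<Longrightarrow> s i = 1 \<or> s i = -1" by (auto simp: S_def)
    from emeasure_cb_orth[of 1 m s "\<lambda>_. 0", OF _ this] show "emeasure (LB m) (cb m (\<lambda>_. 0) 1 \<inter> orth m (\<lambda>_. 0) s) = emeasure (LB m) (cb m (\<lambda>_. 0) 1 \<inter> orth m (\<lambda>_. 0) (\<lambda>_. 1))"
      by simp
  qed
  also have "\<dots> = 2 ^ m * emeasure (LB m) (cb m (\<lambda>_. 0) 1 \<inter> orth m (\<lambda>_. 0) (\<lambda>_. 1))"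
    by (simp add: cardS)
  finally show ?thesis .
qed

definition NV :: "nat \<Rightarrow> nat \<Rightarrow> (nat \<Rightarrow> real) \<Rightarrow> real" where
  "NV n m x = L2_set x {m..<n}"

lemma NV_nonneg: "0 \<le> NV n m x" by (simp add: NV_def)

lemma sum_split_mn:
  fixes m n :: nat assumes "m \<le> n" shows "(\<Sum>i<n. f i) = (\<Sum>i<m. f i) + (\<Sum>i\<in>{m..<n}. f i)"
proof -
  have "{..<n} = {..<m} \<union> {m..<n}" using assms by (auto simp: not_le)
  then show ?thesis by (metis finite_lessThan finite_atLeastLessThan sum.union_disjoint ivl_disj_int_one(2) inf_commute)
qed

lemma edist_sq:
  assumes "m \<le> n"
  shows "(edist n x z)^2 = (\<Sum>i<m. (x i - z i)^2) + (\<Sum>i\<in>{m..<n}. (x i - z i)^2)"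
proof -
  have "(edist n x z)^2 = (\<Sum>i<n. (x i - z i)^2)"
    unfolding edist_def by (rule real_sqrt_pow2) (intro sum_nonneg, simp)
  then show ?thesis using sum_split_mn[OF assms, of "\<lambda>i. (x i - z i)^2"] by simp
qed

lemma NV_sq: "(NV n m x)^2 = (\<Sum>i\<in>{m..<n}. (x i)^2)"
  unfolding NV_def L2_set_def by (rule real_sqrt_pow2) (intro sum_nonneg, simp)

lemma edist_nonneg: "0 \<le> edist n x y"
  unfolding edist_def by (intro real_sqrt_ge_zero sum_nonneg) simp

lemma dG_eq:
  assumes mn: "m \<le> n" and x: "x \<in> Rn n"
  shows "dG n m x = NV n m x"
proof -
  define y0 where "y0 = (\<lambda>i\<in>{..<n}. if i < m then x i else 0)"
  have y0G: "y0 \<in> Gset n m" by (auto simp: y0_def Gset_def Rn_def)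
  have ey0: "edist n x y0 = NV n m x"
  proof -
    have "(\<Sum>i<m. (x i - y0 i)^2) = 0" using mn by (auto simp: y0_def intro!: sum.neutral)
    moreover have "(\<Sum>i\<in>{m..<n}. (x i - y0 i)^2) = (\<Sum>i\<in>{m..<n}. (x i)^2)"
      by (auto simp: y0_def intro!: sum.cong)
    ultimately have "(edist n x y0)^2 = (NV n m x)^2"
      using edist_sq[OF mn, of x y0] NV_sq[of n m x] by simp
    then show ?thesis using edist_nonneg[of n x y0] NV_nonneg[of n m x]
      by (metis power2_eq_iff_nonneg)
  qed
  have lb: "NV n m x \<le> edist n x y" if "y \<in> Gset n m" for y
  proof -
    have "(\<Sum>i\<in>{m..<n}. (x i)^2) = (\<Sum>i\<in>{m..<n}. (x i - y i)^2)"
      using that by (auto simp: Gset_def intro!: sum.cong)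
    also have "\<dots> \<le> (\<Sum>i<m. (x i - y i)^2) + (\<Sum>i\<in>{m..<n}. (x i - y i)^2)"
      by (simp add: sum_nonneg)
    also have "\<dots> = (edist n x y)^2" using edist_sq[OF mn] by simp
    finally have "(NV n m x)^2 \<le> (edist n x y)^2" using NV_sq[of n m x] by simp
    then show ?thesis using edist_nonneg[of n x y] by (rule power2_le_imp_le)
  qed
  show ?thesis unfolding dG_def distset_def
  proof (rule cInf_eq_minimum)
    show "NV n m x \<in> {edist n x y |y. y \<in> Gset n m}" using y0G ey0[symmetric] by blast
  next
    fix z assume "z \<in> {edist n x y |y. y \<in> Gset n m}"
    then obtain y where "z = edist n x y" "y \<in> Gset n m" by blast
    then show "NV n m x \<le> z" using lb by simp
  qed
qed

lemma Gset_iff_NV: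
  assumes "x \<in> Rn n" shows "x \<in> Gset n m \<longleftrightarrow> NV n m x = 0"
  using assms by (simp add: Gset_def NV_def L2_set_eq_0_iff)

lemma Eset_iff:
  "x \<in> Eset n m \<longleftrightarrow> x \<in> Rn n \<and> (\<forall>i<m. -1 < x i \<and> x i < 1) \<and> NV n m x < 1 \<and> 0 < NV n m x"
proof -
  have nz: "NV n m x \<noteq> 0 \<longleftrightarrow> 0 < NV n m x" using NV_nonneg[of n m x] by linarith
  have eq: "sqrt (\<Sum>i\<in>{m..<n}. (x i)^2) = NV n m x" by (simp add: NV_def L2_set_def)
  have "x \<in> Eset n m \<longleftrightarrow> x \<in> Rn n \<and> (\<forall>i<m. -1 < x i \<and> x i < 1) \<and> NV n m x < 1 \<and> x \<notin> Gset n m"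
    unfolding Eset_def eq[symmetric] by blast
  then show ?thesis using Gset_iff_NV[of x n m] nz by blast
qed

abbreviation LJ :: "nat \<Rightarrow> nat \<Rightarrow> (nat \<Rightarrow> real) measure" where
  "LJ m n \<equiv> PiM {m..<n} (\<lambda>_. lborel)"

lemma emeasure_split:
  fixes m n :: nat
  assumes mn: "m \<le> n" and A: "A \<in> sets (LB m)" and B: "B \<in> sets (LJ m n)"
  shows "emeasure (LB n) {z \<in> Rn n. restrict z {..<m} \<in> A \<and> restrict z {m..<n} \<in> B}
       = emeasure (LB m) A * emeasure (LJ m n) B"
proof -
  interpret product_sigma_finite "\<lambda>_. lborel::real measure" by standard
  interpret J: finite_product_sigma_finite "\<lambda>_. lborel::real measure" "{m..<n}" by standard simp
  have U: "{..<m} \<union> {m..<n} = {..<n}" using mn by auto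
  have IJ: "{..<m} \<inter> {m..<n} = {}" by auto
  have D: "distr (LB m \<Otimes>\<^sub>M LJ m n) (LB n) (merge {..<m} {m..<n}) = LB n"
    using distr_merge[OF IJ] U by simp
  define S where "S = {z \<in> Rn n. restrict z {..<m} \<in> A \<and> restrict z {m..<n} \<in> B}"
  have Ssets: "S \<in> sets (LB n)"
  proof -
    have "S = {z \<in> space (LB n). restrict z {..<m} \<in> A \<and> restrict z {m..<n} \<in> B}"
      by (simp add: S_def space_LB)
    also have "\<dots> \<in> sets (LB n)"
    proof -
      have r1: "(\<lambda>z. restrict z {..<m}) \<in> measurable (LB n) (LB m)"
        using mn by (intro measurable_restrict_subset) auto
      have r2: "(\<lambda>z. restrict z {m..<n}) \<in> measurable (LB n) (LJ m n)"
        by (intro measurable_restrict_subset) auto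
      show ?thesis using r1 r2 A B by measurable
    qed
    finally show ?thesis .
  qed
  have pre: "merge {..<m} {m..<n} -` S \<inter> space (LB m \<Otimes>\<^sub>M LJ m n) = A \<times> B"
  proof -
    have Asp: "A \<subseteq> space (LB m)" using A sets.sets_into_space by blast
    have Bsp: "B \<subseteq> space (LJ m n)" using B sets.sets_into_space by blast
    show ?thesis
    proof (intro equalityI subsetI)
      fix p assume p: "p \<in> merge {..<m} {m..<n} -` S \<inter> space (LB m \<Otimes>\<^sub>M LJ m n)"
      obtain u v where uv: "p = (u, v)" by (cases p)
      have u: "u \<in> space (LB m)" and v: "v \<in> space (LJ m n)" using p uv by (auto simp: space_pair_measure)
      have "restrict u {..<m} = u" using u by (simp add: space_PiM PiE_restrict)
      moreover have "restrict v {m..<n} = v" using v by (simp add: space_PiM PiE_restrict)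
      ultimately show "p \<in> A \<times> B" using p uv IJ by (auto simp: S_def)
    next
      fix p assume p: "p \<in> A \<times> B"
      obtain u v where uv: "p = (u, v)" by (cases p)
      have u: "u \<in> space (LB m)" and v: "v \<in> space (LJ m n)" using p uv Asp Bsp by auto
      have ru: "restrict u {..<m} = u" using u by (simp add: space_PiM PiE_restrict)
      have rv: "restrict v {m..<n} = v" using v by (simp add: space_PiM PiE_restrict)
      have "merge {..<m} {m..<n} (u, v) \<in> Rn n"
        unfolding Rn_def using U extensional_merge[of "{..<m}" "{m..<n}" u v]
        by (auto simp: PiE_def)
      then show "p \<in> merge {..<m} {m..<n} -` S \<inter> space (LB m \<Otimes>\<^sub>M LJ m n)"
        using p uv u v IJ ru rv by (auto simp: S_def space_pair_measure)
    qed
  qed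
  have "emeasure (LB n) S = emeasure (distr (LB m \<Otimes>\<^sub>M LJ m n) (LB n) (merge {..<m} {m..<n})) S"
    using D by simp
  also have "\<dots> = emeasure (LB m \<Otimes>\<^sub>M LJ m n) (A \<times> B)"
    using Ssets pre U by (subst emeasure_distr) (auto intro!: measurable_merge[of "{..<m}" "{m..<n}" "\<lambda>_. lborel", simplified U])
  also have "\<dots> = emeasure (LB m) A * emeasure (LJ m n) B"
    using A B by (rule J.emeasure_pair_measure_Times)
  finally show ?thesis unfolding S_def .
qed

lemma emeasure_cube_J:
  assumes "\<And>i. i \<in> {m..<n} \<Longrightarrow> a i \<le> c i"
  shows "emeasure (LJ m n) (PiE {m..<n} (\<lambda>i. {a i<..<c i})) = ennreal (\<Prod>i\<in>{m..<n}. c i - a i)"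
proof -
  interpret product_sigma_finite "\<lambda>_. lborel::real measure" by standard
  have "emeasure (LJ m n) (PiE {m..<n} (\<lambda>i. {a i<..<c i})) = (\<Prod>i\<in>{m..<n}. emeasure lborel {a i<..<c i})"
    by (rule emeasure_PiM) auto
  also have "\<dots> = (\<Prod>i\<in>{m..<n}. ennreal (c i - a i))"
    using assms by (intro prod.cong refl) simp
  also have "\<dots> = ennreal (\<Prod>i\<in>{m..<n}. c i - a i)"
    using assms by (intro prod_ennreal) simp
  finally show ?thesis .
qed

lemma comp_meas: "i < n \<Longrightarrow> (\<lambda>z. z i) \<in> borel_measurable (LB n)"
  using measurable_component_singleton[of i "{..<n}" "\<lambda>_. lborel::real measure"] by simp

lemma sumsq_meas:
  assumes "\<And>i. i \<in> A \<Longrightarrow> i < n"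
  shows "(\<lambda>z. \<Sum>i\<in>A. (z i - c i)^2) \<in> borel_measurable (LB n)"
  by (intro borel_measurable_sum borel_measurable_power borel_measurable_diff comp_meas assms)
     (auto)

lemma NV_meas: "(NV n m) \<in> borel_measurable (LB n)"
proof -
  have "NV n m = (\<lambda>z. sqrt (\<Sum>i\<in>{m..<n}. (z i - 0)^2))" by (auto simp: NV_def L2_set_def fun_eq_iff)
  then show ?thesis using sumsq_meas[of "{m..<n}" n "\<lambda>_. 0"] by simp
qed

lemma edist_meas: "(\<lambda>z. edist n x z) \<in> borel_measurable (LB n)"
proof -
  have "(\<lambda>z. edist n x z) = (\<lambda>z. sqrt (\<Sum>i\<in>{..<n}. (z i - x i)^2))"
    by (auto simp: edist_def fun_eq_iff power2_commute)
  then show ?thesis using sumsq_meas[of "{..<n}" n x] by simp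
qed

lemma cube_pred:
  assumes "m \<le> n"
  shows "Measurable.pred (LB n) (\<lambda>z. \<forall>i\<in>{..<m}. -1 < z i \<and> z i < 1)"
proof (rule pred_intros_finite)
  fix i assume "i \<in> {..<m}"
  then have [measurable]: "(\<lambda>z. z i) \<in> borel_measurable (LB n)" using assms comp_meas by auto
  show "Measurable.pred (LB n) (\<lambda>z. -1 < z i \<and> z i < 1)" by measurable
qed simp

lemma Psi_char:
  assumes mn: "m \<le> n" and x: "x \<in> Eset n m"
  shows "Psi n m b x = {z \<in> Rn n. (\<forall>i\<in>{..<m}. -1 < z i \<and> z i < 1) \<and> NV n m z < 1 \<and> 0 < NV n m z
            \<and> edist n x z < NV n m x \<and> NV n m z < b * NV n m x}"
proof -
  have xR: "x \<in> Rn n" using x Eset_iff by blast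
  show ?thesis
    unfolding Psi_def oball_def annul_def dG_def[symmetric] using dG_eq[OF mn] xR
    by (auto simp: Eset_iff)
qed

lemma Psi_sets:
  assumes mn: "m \<le> n" and x: "x \<in> Eset n m"
  shows "Psi n m b x \<in> sets (LB n)"
proof -
  note [measurable] = NV_meas edist_meas cube_pred[OF mn]
  have "Psi n m b x = {z \<in> space (LB n). (\<forall>i\<in>{..<m}. -1 < z i \<and> z i < 1) \<and> NV n m z < 1 \<and> 0 < NV n m z
            \<and> edist n x z < NV n m x \<and> NV n m z < b * NV n m x}"
    using Psi_char[OF mn x] by (simp add: space_LB)
  also have "\<dots> \<in> sets (LB n)" by measurable
  finally show ?thesis .
qed

lemma NV_ge_comp: "i \<in> {m..<n} \<Longrightarrow> \<bar>z i\<bar> \<le> NV n m z"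
  unfolding NV_def using member_le_L2_set[of "{m..<n}" i "\<lambda>i. \<bar>z i\<bar>"]
  by (simp add: L2_set_def)

lemma Eset_box: "Eset n m \<subseteq> PiE {..<n} (\<lambda>_. {-1<..<1})"
proof
  fix z assume z: "z \<in> Eset n m"
  then have "z \<in> Rn n" "\<forall>i<m. -1 < z i \<and> z i < 1" "NV n m z < 1" by (auto simp: Eset_iff)
  moreover have "\<bar>z i\<bar> < 1" if "m \<le> i" "i < n" for i
    using NV_ge_comp[of i m n z] that \<open>NV n m z < 1\<close> by auto
  ultimately have "-1 < z i \<and> z i < 1" if "i < n" for i
    using that by (cases "i < m") (auto simp: abs_less_iff not_less)
  then show "z \<in> PiE {..<n} (\<lambda>_. {-1<..<1})"
    using \<open>z \<in> Rn n\<close> by (auto simp: Rn_def PiE_iff)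
qed

lemma Psi_fmeas:
  assumes mn: "m \<le> n" and x: "x \<in> Eset n m"
  shows "Psi n m b x \<in> fmeasurable (LB n)"
proof (rule fmeasurableI2[of "PiE {..<n} (\<lambda>_. {-1<..<1})"])
  interpret product_sigma_finite "\<lambda>_. lborel::real measure" by standard
  have "emeasure (LB n) (PiE {..<n} (\<lambda>_. {-1<..<1::real})) = (\<Prod>i<n. emeasure lborel {-1<..<1::real})"
    by (rule emeasure_PiM) auto
  then show "PiE {..<n} (\<lambda>_. {-1<..<1::real}) \<in> fmeasurable (LB n)"
    by (intro fmeasurableI) (auto simp: ennreal_prod_eq_top power_less_top_ennreal)
  show "Psi n m b x \<subseteq> PiE {..<n} (\<lambda>_. {-1<..<1})"
    using Eset_box unfolding Psi_def by blast
  show "Psi n m b x \<in> sets (LB n)" by (rule Psi_sets[OF mn x])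
qed

lemma L2_set_abs: "L2_set (\<lambda>i. \<bar>f i\<bar>) A = L2_set f A"
  by (simp add: L2_set_def)

lemma L2_set_neg: "L2_set (\<lambda>i. - f i) A = L2_set f A"
  by (simp add: L2_set_def)

lemma sq_le_abs: "(a::real)^2 \<le> r^2 \<Longrightarrow> 0 \<le> r \<Longrightarrow> \<bar>a\<bar> \<le> r"
  by (metis power2_abs power2_le_imp_le)

lemma P_sub_Psi:
  assumes mn: "m < n" and b: "0 < b" "b < 1" and x: "x \<in> Eset n m"
    and D_def: "D = NV n m x" and k_def: "k = n - m" and r_def: "r = D * sqrt (3*b) / 2"
    and h_def: "h = b * D / (4 * sqrt k)" and cen_def: "cen = (\<lambda>i. 3/4 * b * x i)"
    and s_def: "s = (\<lambda>i. if 0 \<le> x i then -1 else (1::real))"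
  shows "{z \<in> Rn n. restrict z {..<m} \<in> cb m x r \<inter> orth m x s \<and>
            restrict z {m..<n} \<in> PiE {m..<n} (\<lambda>i. {cen i - h<..<cen i + h})} \<subseteq> Psi n m b x"
proof
  fix z assume z: "z \<in> {z \<in> Rn n. restrict z {..<m} \<in> cb m x r \<inter> orth m x s \<and>
            restrict z {m..<n} \<in> PiE {m..<n} (\<lambda>i. {cen i - h<..<cen i + h})}"
  define J where "J = {m..<n}"
  have finJ: "finite J" and neJ: "J \<noteq> {}" using mn by (auto simp: J_def)
  have cardJ: "card J = k" by (simp add: J_def k_def)
  have kpos: "k > 0" using mn by (simp add: k_def)
  have xE: "x \<in> Rn n" "\<forall>i<m. -1 < x i \<and> x i < 1" "NV n m x < 1" "0 < NV n m x"
    using x by (auto simp: Eset_iff)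
  have D: "0 < D" "D < 1" using xE D_def by auto
  have zR: "z \<in> Rn n" using z by auto
  have hu: "(\<Sum>i<m. (z i - x i)^2) \<le> r^2"
  proof -
    have "(\<Sum>i<m. (restrict z {..<m} i - x i)^2) \<le> r^2" using z by (auto simp: cb_def)
    moreover have "(\<Sum>i<m. (restrict z {..<m} i - x i)^2) = (\<Sum>i<m. (z i - x i)^2)" by simp
    ultimately show ?thesis by simp
  qed
  have hs: "0 \<le> s i * (z i - x i)" if "i < m" for i
    using z that by (auto simp: orth_def)
  have hw: "\<bar>z i - cen i\<bar> < h" if "i \<in> J" for i
  proof -
    have "restrict z {m..<n} i \<in> {cen i - h<..<cen i + h}" using z that by (auto simp: J_def PiE_iff)
    then have "cen i - h < z i \<and> z i < cen i + h" using that by (simp add: J_def)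
    then show ?thesis by (simp add: abs_less_iff)
  qed
  have r0: "0 \<le> r" using D b by (simp add: r_def)
  have r2: "r^2 = D^2 * (3*b/4)"
    using b by (simp add: r_def power_mult_distrib power_divide)
  have r1: "r < 1"
  proof -
    have "D^2 < 1^2" using D by (intro power_strict_mono) auto
    moreover have "D^2 * (3*b/4) \<le> D^2" using b by (intro mult_left_le) auto
    ultimately have "r^2 < 1^2" using r2 by simp
    then show ?thesis using power_less_imp_less_base[of r 2 1] by simp
  qed
  have ucube: "-1 < z i \<and> z i < 1" if "i < m" for i
  proof -
    have "(z i - x i)^2 \<le> (\<Sum>i<m. (z i - x i)^2)"
      using that by (intro member_le_sum) auto
    then have "\<bar>z i - x i\<bar> \<le> r" using hu r0 by (intro sq_le_abs) auto
    then show ?thesis using hs[OF that] xE(2) that r1 by (cases "0 \<le> x i") (auto simp: s_def)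
  qed
  define Lw where "Lw = L2_set (\<lambda>i. z i - cen i) J"
  have Lw: "Lw < b * D / 4"
  proof -
    have "Lw = L2_set (\<lambda>i. \<bar>z i - cen i\<bar>) J" by (simp add: Lw_def L2_set_abs)
    also have "\<dots> < L2_set (\<lambda>i. h) J" using finJ neJ hw by (intro L2_set_strict_mono) auto
    also have "\<dots> = sqrt k * \<bar>h\<bar>" by (simp add: L2_set_constant cardJ)
    also have "\<dots> = b * D / 4" using kpos b D by (simp add: h_def abs_mult)
    finally show ?thesis .
  qed
  have Lw0: "0 \<le> Lw" by (simp add: Lw_def)
  have Lc: "L2_set cen J = 3/4 * b * D"
    using L2_set_right_distrib[of "3/4*b" x J] b by (simp add: cen_def D_def NV_def J_def)
  have NVz: "NV n m z = L2_set z J" by (simp add: NV_def J_def)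
  have up: "NV n m z \<le> 3/4 * b * D + Lw"
  proof -
    have "L2_set z J = L2_set (\<lambda>i. cen i + (z i - cen i)) J" by simp
    also have "\<dots> \<le> L2_set cen J + Lw" unfolding Lw_def by (rule L2_set_triangle_ineq)
    finally show ?thesis using Lc NVz by simp
  qed
  have lo: "3/4 * b * D \<le> NV n m z + Lw"
  proof -
    have t: "L2_set (\<lambda>i. z i + - (z i - cen i)) J \<le> L2_set z J + L2_set (\<lambda>i. - (z i - cen i)) J"
      by (rule L2_set_triangle_ineq)
    have e: "(\<lambda>i. z i + - (z i - cen i)) = cen" by auto
    have "L2_set cen J \<le> L2_set z J + Lw" using t unfolding e L2_set_neg Lw_def .
    then show ?thesis using Lc NVz by simp
  qed
  have xz: "L2_set (\<lambda>i. x i - z i) J \<le> (1 - 3/4 * b) * D + Lw"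
  proof -
    have t: "L2_set (\<lambda>i. (1 - 3/4*b) * x i + - (z i - cen i)) J \<le> L2_set (\<lambda>i. (1 - 3/4*b) * x i) J + L2_set (\<lambda>i. - (z i - cen i)) J"
      by (rule L2_set_triangle_ineq)
    have e: "(\<lambda>i. (1 - 3/4*b) * x i + - (z i - cen i)) = (\<lambda>i. x i - z i)"
      by (auto simp: cen_def algebra_simps)
    have f: "L2_set (\<lambda>i. (1 - 3/4*b) * x i) J = (1 - 3/4*b) * D"
      using L2_set_right_distrib[of "1 - 3/4*b" x J] b by (simp add: D_def NV_def J_def)
    show ?thesis using t unfolding e f L2_set_neg Lw_def .
  qed
  have NVz_lt: "NV n m z < b * D" using up Lw by linarith
  have bD: "0 < b * D" using b D by simp
  have NVz_pos: "0 < NV n m z" using lo Lw bD by linarith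
  have "b * D < 1 * 1" using b D by (intro mult_strict_mono) auto
  then have NVz_1: "NV n m z < 1" using NVz_lt by linarith
  have ed: "edist n x z < D"
  proof -
    have A: "(\<Sum>i<m. (x i - z i)^2) \<le> D^2 * (3*b/4)"
      using hu r2 by (simp add: power2_commute)
    define Q where "Q = L2_set (\<lambda>i. x i - z i) J"
    have Q0: "0 \<le> Q" by (simp add: Q_def)
    have Qlt: "Q < D * (1 - b/2)" using xz Lw unfolding Q_def by (simp add: algebra_simps)
    have B: "(\<Sum>i\<in>{m..<n}. (x i - z i)^2) = Q^2"
      by (simp add: Q_def L2_set_def J_def sum_nonneg)
    have "Q^2 < (D * (1 - b/2))^2" using Q0 Qlt by (intro power_strict_mono) auto
    then have "(edist n x z)^2 < D^2 * (3*b/4) + (D * (1 - b/2))^2"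
      using edist_sq[of m n x z] mn A B by simp
    also have "\<dots> \<le> D^2"
    proof -
      have "D^2 * (3*b/4) + (D * (1 - b/2))^2 = D^2 * (1 - b/4 + b^2/4)" by (simp add: algebra_simps power2_eq_square)
      also have "\<dots> \<le> D^2 * 1" using b by (intro mult_left_mono) (auto simp: power2_eq_square)
      finally show ?thesis by simp
    qed
    finally have "(edist n x z)^2 < D^2" .
    then show ?thesis using D power_less_imp_less_base[of "edist n x z" 2 D] by simp
  qed
  show "z \<in> Psi n m b x"
    unfolding Psi_char[OF less_imp_le[OF mn] x]
    using zR ucube NVz_1 NVz_pos ed NVz_lt D_def by auto
qed

lemma split_sets:
  fixes m n :: nat
  assumes mn: "m \<le> n" and A: "A \<in> sets (LB m)" and B: "B \<in> sets (LJ m n)"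
  shows "{z \<in> Rn n. restrict z {..<m} \<in> A \<and> restrict z {m..<n} \<in> B} \<in> sets (LB n)"
proof -
  have "{z \<in> Rn n. restrict z {..<m} \<in> A \<and> restrict z {m..<n} \<in> B} =
        {z \<in> space (LB n). restrict z {..<m} \<in> A \<and> restrict z {m..<n} \<in> B}"
    by (simp add: space_LB)
  also have "\<dots> \<in> sets (LB n)"
  proof -
    have r1: "(\<lambda>z. restrict z {..<m}) \<in> measurable (LB n) (LB m)"
      using mn by (intro measurable_restrict_subset) auto
    have r2: "(\<lambda>z. restrict z {m..<n}) \<in> measurable (LB n) (LJ m n)"
      by (intro measurable_restrict_subset) auto
    show ?thesis using r1 r2 A B by measurable
  qed
  finally show ?thesis .
qed

lemma omega_p:
  obtains wp where "emeasure (LB m) (cb m (\<lambda>_. 0) 1 \<inter> orth m (\<lambda>_. 0) (\<lambda>_. 1)) = ennreal wp"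
    "0 \<le> wp" "unit_ball_vol (real m) \<le> 2^m * wp"
proof -
  let ?E = "emeasure (LB m) (cb m (\<lambda>_. 0) 1 \<inter> orth m (\<lambda>_. 0) (\<lambda>_. 1))"
  have le: "?E \<le> emeasure (LB m) (cb m (\<lambda>_. 0) 1)"
    by (intro emeasure_mono) auto
  have "?E < top" using le emeasure_cb01[of m]
    by (metis ennreal_less_top order_le_less_trans)
  then obtain wp where wp: "?E = ennreal wp" "0 \<le> wp" using less_top_ennreal by blast
  have "ennreal (unit_ball_vol (real m)) \<le> 2^m * ennreal wp"
    using cb_orth_cover[of m] emeasure_cb01[of m] wp by simp
  also have "(2::ennreal)^m * ennreal wp = ennreal (2^m * wp)"
  proof -
    have "ennreal (2^m) = (2::ennreal)^m" by (metis ennreal_numeral ennreal_power zero_le_numeral)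
    then show ?thesis using wp by (simp add: ennreal_mult)
  qed
  finally have "unit_ball_vol (real m) \<le> 2^m * wp"
    using wp by (subst (asm) ennreal_le_iff) auto
  then show ?thesis using that wp by blast
qed

lemma Psi_measure_lb:
  assumes mn: "m < n" and b: "0 < b" "b < 1" and x: "x \<in> Eset n m"
  shows "(sqrt (3*b)/2)^m * (unit_ball_vol (real m) / 2^m) * (b / (2 * sqrt (real (n-m))))^(n-m) * (NV n m x)^n
          \<le> measure (Leb n) (Psi n m b x)"
proof -
  define D where "D = NV n m x"
  define k where "k = n - m"
  define r where "r = D * sqrt (3*b) / 2"
  define h where "h = b * D / (4 * sqrt k)"
  define cen where "cen = (\<lambda>i. 3/4 * b * x i)"
  define s where "s = (\<lambda>i. if 0 \<le> x i then -1 else (1::real))"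
  define A where "A = cb m x r \<inter> orth m x s"
  define B where "B = PiE {m..<n} (\<lambda>i. {cen i - h<..<cen i + h})"
  define P where "P = {z \<in> Rn n. restrict z {..<m} \<in> A \<and> restrict z {m..<n} \<in> B}"
  have D: "0 < D" "D < 1" using x by (auto simp: Eset_iff D_def)
  have kpos: "0 < k" using mn by (simp add: k_def)
  have r: "0 < r" using D b by (simp add: r_def)
  have h: "0 < h" using D b kpos by (simp add: h_def)
  have sub: "P \<subseteq> Psi n m b x"
    unfolding P_def A_def B_def by (rule P_sub_Psi[OF mn b x D_def k_def r_def h_def cen_def s_def])
  have Asets: "A \<in> sets (LB m)" by (simp add: A_def)
  have Bsets: "B \<in> sets (LJ m n)" by (simp add: B_def)
  have Psets: "P \<in> sets (LB n)" unfolding P_def using mn Asets Bsets by (intro split_sets) auto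
  obtain wp where wp: "emeasure (LB m) (cb m (\<lambda>_. 0) 1 \<inter> orth m (\<lambda>_. 0) (\<lambda>_. 1)) = ennreal wp"
    "0 \<le> wp" "unit_ball_vol (real m) \<le> 2^m * wp" by (rule omega_p)
  have eA: "emeasure (LB m) A = ennreal (r^m * wp)"
    unfolding A_def using emeasure_cb_orth[OF r, of m s x] wp r
    by (simp add: s_def ennreal_mult)
  have eB: "emeasure (LJ m n) B = ennreal ((2*h)^k)"
  proof -
    have "emeasure (LJ m n) B = ennreal (\<Prod>i\<in>{m..<n}. (cen i + h) - (cen i - h))"
      unfolding B_def using h by (intro emeasure_cube_J) auto
    also have "(\<Prod>i\<in>{m..<n}. (cen i + h) - (cen i - h)) = (2*h)^k" by (simp add: k_def)
    finally show ?thesis .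
  qed
  have eP: "emeasure (LB n) P = ennreal (r^m * wp * (2*h)^k)"
    unfolding P_def using emeasure_split[of m n A B] mn Asets Bsets eA eB r h wp
    by (simp add: ennreal_mult)
  have mP: "measure (LB n) P = r^m * wp * (2*h)^k"
    using eP r h wp by (simp add: measure_def)
  have "measure (Leb n) (Psi n m b x) = measure (LB n) (Psi n m b x)"
    unfolding Leb_def using Psi_sets[OF less_imp_le[OF mn] x] by simp
  also have "measure (LB n) P \<le> measure (LB n) (Psi n m b x)"
    by (rule measure_mono_fmeasurable[OF sub Psets Psi_fmeas[OF less_imp_le[OF mn] x]])
  finally have mPsi: "r^m * wp * (2*h)^k \<le> measure (Leb n) (Psi n m b x)" using mP by simp
  have "r^m * (unit_ball_vol (real m) / 2^m) * (2*h)^k \<le> r^m * wp * (2*h)^k"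
    using wp r h by (intro mult_right_mono mult_left_mono) (auto simp: field_simps)
  moreover have "r^m * (unit_ball_vol (real m) / 2^m) * (2*h)^k =
     (sqrt (3*b)/2)^m * (unit_ball_vol (real m) / 2^m) * (b / (2 * sqrt (real (n-m))))^(n-m) * (NV n m x)^n"
  proof -
    have "r = D * (sqrt (3*b)/2)" by (simp add: r_def)
    then have "r^m = D^m * (sqrt (3*b)/2)^m" by (simp only: power_mult_distrib)
    moreover have "(2*h)^k = D^k * (b / (2 * sqrt (real (n-m))))^(n-m)"
      by (simp add: h_def k_def power_mult_distrib power_divide field_simps)
    moreover have "D^n = D^m * D^k" using mn by (simp add: k_def power_add[symmetric])
    ultimately show ?thesis by (simp add: D_def)
  qed
  ultimately show ?thesis using mPsi by linarith
qed

definition Tset :: "nat \<Rightarrow> nat \<Rightarrow> (nat \<Rightarrow> real) \<Rightarrow> real \<Rightarrow> (nat \<Rightarrow> real) set" where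
  "Tset n m y \<rho> = {z \<in> Rn n. restrict z {..<m} \<in> cb m y \<rho> \<and>
       restrict z {m..<n} \<in> PiE {m..<n} (\<lambda>_. {-\<rho><..<\<rho>})}"

lemma Tset_sets: "m \<le> n \<Longrightarrow> Tset n m y \<rho> \<in> sets (LB n)"
  unfolding Tset_def by (intro split_sets) auto

lemma Tset_meas:
  assumes mn: "m \<le> n" and \<rho>: "0 < \<rho>"
  shows "emeasure (LB n) (Tset n m y \<rho>) = ennreal (unit_ball_vol (real m) * 2^(n-m) * \<rho>^n)"
proof -
  have "emeasure (LB n) (Tset n m y \<rho>) = emeasure (LB m) (cb m y \<rho>) * emeasure (LJ m n) (PiE {m..<n} (\<lambda>_. {-\<rho><..<\<rho>}))"
    unfolding Tset_def by (rule emeasure_split[OF mn]) auto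
  also have "emeasure (LJ m n) (PiE {m..<n} (\<lambda>_. {-\<rho><..<\<rho>})) = ennreal (\<Prod>i\<in>{m..<n}. \<rho> - (-\<rho>))"
    using emeasure_cube_J[of m n "\<lambda>_. -\<rho>" "\<lambda>_. \<rho>"] \<rho> by simp
  also have "(\<Prod>i\<in>{m..<n}. \<rho> - (-\<rho>)) = (2*\<rho>)^(n-m)" by simp
  also have "emeasure (LB m) (cb m y \<rho>) = ennreal (\<rho>^m * unit_ball_vol (real m))"
    by (rule emeasure_cb[OF \<rho>])
  finally have "emeasure (LB n) (Tset n m y \<rho>) = ennreal (\<rho>^m * unit_ball_vol (real m) * (2*\<rho>)^(n-m))"
    using \<rho> by (simp add: ennreal_mult)
  also have "\<rho>^m * unit_ball_vol (real m) * (2*\<rho>)^(n-m) = unit_ball_vol (real m) * 2^(n-m) * \<rho>^n"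
  proof -
    have "\<rho>^n = \<rho>^m * \<rho>^(n-m)" using mn by (simp add: power_add[symmetric])
    then show ?thesis by (simp add: power_mult_distrib)
  qed
  finally show ?thesis .
qed

lemma q_index:
  fixes q R D :: real
  assumes q: "1 < q" and R: "0 < R" and RD: "R \<le> D"
  shows "\<exists>j::nat. q^j * R \<le> D \<and> D < q^(Suc j) * R"
proof -
  define L where "L = log q (D / R)"
  have DR: "1 \<le> D / R" using R RD by simp
  have L0: "0 \<le> L" unfolding L_def using q DR by simp
  define j where "j = nat \<lfloor>L\<rfloor>"
  have jL: "real j \<le> L" "L < real j + 1" using L0 by (auto simp: j_def)
  have "q^j = q powr (real j)" using q by (simp add: powr_realpow)
  also have "\<dots> \<le> q powr L" using jL q by (intro powr_mono) auto
  also have "\<dots> = D / R" unfolding L_def using q DR by simp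
  finally have 1: "q^j * R \<le> D" using R by (simp add: field_simps)
  have "D / R = q powr L" unfolding L_def using q DR by simp
  also have "\<dots> < q powr (real j + 1)" using jL q by (intro powr_less_mono) auto
  also have "\<dots> = q^(Suc j)" using q by (metis of_nat_Suc powr_realpow add.commute less_trans zero_less_one)
  finally have 2: "D < q^(Suc j) * R" using R by (simp add: field_simps)
  show ?thesis using 1 2 by blast
qed

lemma Psi_inv_facts:
  assumes mn: "m \<le> n" and x: "x \<in> Psi_inv n m b y"
  shows "x \<in> Eset n m" "edist n x y < NV n m x" "NV n m y < b * NV n m x" "0 < NV n m y" "y \<in> Rn n"
proof -
  have xE: "x \<in> Eset n m" and yP: "y \<in> Psi n m b x" using x by (auto simp: Psi_inv_def)
  show "x \<in> Eset n m" by (fact xE)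
  from yP[unfolded Psi_char[OF mn xE]]
  show "edist n x y < NV n m x" "NV n m y < b * NV n m x" "0 < NV n m y" "y \<in> Rn n" by auto
qed

lemma edist_sym: "edist n x y = edist n y x"
  by (simp add: edist_def power2_commute)

lemma pointwise:
  assumes mn: "m < n" and b: "0 < b" "b < 1" and \<beta>: "0 < \<beta>"
    and h\<gamma>: "\<forall>x\<in>Eset n m. 0 \<le> \<gamma> x \<and> dG n m x powr \<beta> * \<gamma> x \<le> K3"
    and x: "x \<in> Psi_inv n m b y"
    and Lc: "0 < Lc" "\<And>x. x \<in> Eset n m \<Longrightarrow> Lc * (NV n m x)^n \<le> measure (Leb n) (Psi n m b x)"
  defines "q \<equiv> 6/5 :: real" and "R \<equiv> NV n m y / b"
  shows "\<exists>j::nat. \<gamma> x / measure (Leb n) (Psi n m b x) \<le> K3 * (q^j*R) powr (-\<beta>) / (Lc * (q^j*R)^n)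
               \<and> x \<in> Tset n m y (q^(Suc j) * R)"
proof -
  note F = Psi_inv_facts[OF less_imp_le[OF mn] x]
  define D where "D = NV n m x"
  have xE: "x \<in> Eset n m" by (rule F(1))
  have D: "0 < D" "D < 1" using xE by (auto simp: Eset_iff D_def)
  have R: "0 < R" using F(4) b by (simp add: R_def)
  have RD: "R < D" using F(3) b by (simp add: R_def D_def field_simps)
  obtain j where j: "q^j * R \<le> D" "D < q^(Suc j) * R"
    using q_index[of q R D] R RD by (auto simp: q_def)
  have qjR: "0 < q^j * R" using R by (simp add: q_def)
  have dG: "dG n m x = D" using dG_eq[OF less_imp_le[OF mn]] xE by (simp add: Eset_iff D_def)
  have g0: "0 \<le> \<gamma> x" and gK: "D powr \<beta> * \<gamma> x \<le> K3" using h\<gamma> xE dG by auto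
  have Dp: "0 < D powr \<beta>" using D by simp
  have g1: "\<gamma> x \<le> K3 * D powr (-\<beta>)"
    using gK Dp by (simp add: powr_minus field_simps)
  have g2: "D powr (-\<beta>) \<le> (q^j*R) powr (-\<beta>)"
    using \<beta> qjR j by (intro powr_mono2') auto
  have K30: "0 \<le> K3" using gK g0 Dp by (smt (verit) mult_nonneg_nonneg)
  have g3: "\<gamma> x \<le> K3 * (q^j*R) powr (-\<beta>)"
    using g1 g2 K30 by (smt (verit) mult_left_mono)
  have m1: "Lc * (q^j*R)^n \<le> Lc * D^n"
    using Lc(1) j qjR by (intro mult_left_mono power_mono) auto
  have m2: "Lc * D^n \<le> measure (Leb n) (Psi n m b x)" using Lc(2)[OF xE] by (simp add: D_def)
  have pos: "0 < Lc * (q^j*R)^n" using Lc(1) qjR by simp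
  have "\<gamma> x / measure (Leb n) (Psi n m b x) \<le> \<gamma> x / (Lc * (q^j*R)^n)"
    using g0 pos m1 m2 by (intro divide_left_mono) auto
  also have "\<dots> \<le> K3 * (q^j*R) powr (-\<beta>) / (Lc * (q^j*R)^n)"
    using g3 pos by (intro divide_right_mono) auto
  finally have ineq: "\<gamma> x / measure (Leb n) (Psi n m b x) \<le> K3 * (q^j*R) powr (-\<beta>) / (Lc * (q^j*R)^n)" .
  define \<rho> where "\<rho> = q^(Suc j) * R"
  have D\<rho>: "D < \<rho>" using j by (simp add: \<rho>_def)
  have xR: "x \<in> Rn n" using xE by (simp add: Eset_iff)
  have inT: "x \<in> Tset n m y \<rho>"
  proof -
    have "(\<Sum>i<m. (x i - y i)^2) \<le> (edist n x y)^2"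
      using edist_sq[of m n x y] mn by (simp add: sum_nonneg)
    also have "\<dots> \<le> D^2" using F(2) edist_nonneg[of n x y] by (intro power_mono) (auto simp: D_def)
    also have "\<dots> \<le> \<rho>^2" using D D\<rho> by (intro power_mono) auto
    finally have s1: "(\<Sum>i<m. (x i - y i)^2) \<le> \<rho>^2" .
    have s1': "(\<Sum>i<m. (restrict x {..<m} i - y i)^2) \<le> \<rho>^2" using s1 by simp
    have s2: "-\<rho> < x i \<and> x i < \<rho>" if "m \<le> i" "i < n" for i
    proof -
      have "\<bar>x i\<bar> \<le> NV n m x" using NV_ge_comp[of i m n x] that by simp
      then show ?thesis using D\<rho> unfolding D_def by linarith
    qed
    show ?thesis unfolding Tset_def cb_def using xR s1' s2
      by (auto simp: Rn_def PiE_iff)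
  qed
  show ?thesis using ineq inT by (auto simp: \<rho>_def)
qed

lemma qjR_powr:
  fixes q R \<beta> :: real
  assumes q: "1 < q" and R: "0 < R"
  shows "(q^j * R) powr (-\<beta>) = R powr (-\<beta>) * (q powr (-\<beta>))^j"
proof -
  have "(q^j * R) powr (-\<beta>) = (q^j) powr (-\<beta>) * R powr (-\<beta>)"
    using q R by (simp add: powr_mult)
  also have "(q^j) powr (-\<beta>) = (q powr (real j)) powr (-\<beta>)" using q by (simp add: powr_realpow)
  also have "\<dots> = q powr (real j * -\<beta>)" by (simp add: powr_powr)
  also have "\<dots> = (q powr (-\<beta>))^j" using q by (simp add: powr_power)
  finally show ?thesis by simp
qed

lemma integral_bound:
  assumes mn: "m < n" and b: "0 < b" "b < 1" and \<beta>: "0 < \<beta>"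
    and h\<gamma>: "\<forall>x\<in>Eset n m. 0 \<le> \<gamma> x \<and> dG n m x powr \<beta> * \<gamma> x \<le> K3"
    and y: "y \<in> Eset n m"
    and Lc: "0 < Lc" "\<And>x. x \<in> Eset n m \<Longrightarrow> Lc * (NV n m x)^n \<le> measure (Leb n) (Psi n m b x)"
  defines "q \<equiv> 6/5 :: real" and "R \<equiv> NV n m y / b"
  shows "(\<integral>\<^sup>+ x \<in> Psi_inv n m b y. ennreal (\<gamma> x / measure (Leb n) (Psi n m b x)) \<partial>Leb n)
     \<le> ennreal (K3 * R powr (-\<beta>) * unit_ball_vol (real m) * 2^(n-m) * q^n / Lc / (1 - q powr (-\<beta>)))"
proof -
  define c where "c j = K3 * (q^j*R) powr (-\<beta>) / (Lc * (q^j*R)^n)" for j :: nat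
  define T where "T j = Tset n m y (q^(Suc j) * R)" for j :: nat
  define t where "t = q powr (-\<beta>)"
  define A0 where "A0 = K3 * R powr (-\<beta>) * unit_ball_vol (real m) * 2^(n-m) * q^n / Lc"
  have q: "1 < q" by (simp add: q_def)
  have R: "0 < R" using y b by (simp add: R_def Eset_iff)
  have t: "0 \<le> t" "t < 1"
  proof -
    show "0 \<le> t" by (simp add: t_def)
    have "q powr (-\<beta>) < q powr 0" using q \<beta> by (intro powr_less_mono) auto
    then show "t < 1" using q by (simp add: t_def)
  qed
  have K3: "0 \<le> K3"
  proof -
    have "0 \<le> \<gamma> y" "dG n m y powr \<beta> * \<gamma> y \<le> K3" using h\<gamma> y by auto
    then show ?thesis by (smt (verit) mult_nonneg_nonneg powr_ge_zero)
  qed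
  have c0: "0 \<le> c j" for j using K3 Lc R q by (simp add: c_def)
  have Tsets: "T j \<in> sets (LB n)" for j using mn by (simp add: T_def Tset_sets)
  have step1: "(\<integral>\<^sup>+ x \<in> Psi_inv n m b y. ennreal (\<gamma> x / measure (Leb n) (Psi n m b x)) \<partial>Leb n)
      = (\<integral>\<^sup>+ x. ennreal (\<gamma> x / measure (Leb n) (Psi n m b x)) * indicator (Psi_inv n m b y) x \<partial>LB n)"
    unfolding Leb_def by (simp add: nn_integral_completion)
  also have "\<dots> \<le> (\<integral>\<^sup>+ x. (\<Sum>j. ennreal (c j) * indicator (T j) x) \<partial>LB n)"
  proof (intro nn_integral_mono)
    fix x
    show "ennreal (\<gamma> x / measure (Leb n) (Psi n m b x)) * indicator (Psi_inv n m b y) x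
          \<le> (\<Sum>j. ennreal (c j) * indicator (T j) x)"
    proof (cases "x \<in> Psi_inv n m b y")
      case False then show ?thesis by simp
    next
      case True
      obtain j where j: "\<gamma> x / measure (Leb n) (Psi n m b x) \<le> c j" "x \<in> T j"
        using pointwise[OF mn b \<beta> h\<gamma> True Lc] unfolding c_def T_def q_def R_def by blast
      have "ennreal (\<gamma> x / measure (Leb n) (Psi n m b x)) * indicator (Psi_inv n m b y) x
          \<le> ennreal (c j) * indicator (T j) x"
        using True j by (simp add: ennreal_leI)
      also have "\<dots> \<le> (\<Sum>j. ennreal (c j) * indicator (T j) x)"
      proof -
        have aux: "f j \<le> suminf f" for f :: "nat \<Rightarrow> ennreal"
          using sum_le_suminf[OF summableI, of "{j}" f] by simp
        show ?thesis by (rule aux)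
      qed
      finally show ?thesis .
    qed
  qed
  also have "\<dots> = (\<Sum>j. ennreal (c j) * emeasure (LB n) (T j))"
    using Tsets by (subst nn_integral_suminf) (auto simp: nn_integral_cmult_indicator)
  also have "\<dots> = (\<Sum>j. ennreal (A0 * t^j))"
  proof (intro suminf_cong)
    fix j
    have \<rho>: "0 < q^(Suc j) * R" using q R by simp
    have nn: "0 \<le> unit_ball_vol (real m) * 2^(n-m) * (q^(Suc j) * R)^n" using \<rho> by simp
    have "emeasure (LB n) (T j) = ennreal (unit_ball_vol (real m) * 2^(n-m) * (q^(Suc j) * R)^n)"
      unfolding T_def by (rule Tset_meas[OF less_imp_le[OF mn] \<rho>])
    then have "ennreal (c j) * emeasure (LB n) (T j) = ennreal (c j) * ennreal (unit_ball_vol (real m) * 2^(n-m) * (q^(Suc j) * R)^n)"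
      by simp
    also have "\<dots> = ennreal (c j * (unit_ball_vol (real m) * 2^(n-m) * (q^(Suc j) * R)^n))"
      by (rule ennreal_mult[symmetric, OF c0 nn])
    also have "c j * (unit_ball_vol (real m) * 2^(n-m) * (q^(Suc j) * R)^n) = A0 * t^j"
    proof -
      have e1: "(q^(Suc j) * R)^n = q^n * (q^j*R)^n" by (simp add: power_mult_distrib)
      have pos: "0 < (q^j*R)^n" using q R by simp
      have "c j * (unit_ball_vol (real m) * 2^(n-m) * (q^(Suc j) * R)^n)
          = K3 * (q^j*R) powr (-\<beta>) * unit_ball_vol (real m) * 2^(n-m) * q^n / Lc"
        unfolding c_def e1 using pos Lc(1) by (simp add: field_simps)
      also have "\<dots> = A0 * t^j"
        unfolding A0_def t_def qjR_powr[OF q R] by (simp add: field_simps)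
      finally show ?thesis .
    qed
    finally show "ennreal (c j) * emeasure (LB n) (T j) = ennreal (A0 * t^j)" .
  qed
  also have "\<dots> = ennreal (\<Sum>j. A0 * t^j)"
  proof (rule suminf_ennreal2)
    have "0 \<le> A0" using K3 Lc(1) R by (simp add: A0_def q_def)
    then show "0 \<le> A0 * t^j" for j using t by simp
    show "summable (\<lambda>j. A0 * t^j)" using t by (intro summable_mult summable_geometric) auto
  qed
  also have "(\<Sum>j. A0 * t^j) = A0 / (1 - t)"
    using t by (simp add: suminf_mult suminf_geometric summable_geometric)
  finally show ?thesis by (simp add: A0_def t_def)
qed

lemma Lc_ratio:
  fixes b q :: real and k m :: nat
  assumes b: "0 < b" and k: "0 < k" and \<omega>: "0 < \<omega>"
  shows "\<omega> * 2^k * q^(m+k) / ((sqrt (3*b)/2)^m * (\<omega> / 2^m) * (b / (2 * sqrt (real k)))^k)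
       = (4*q/sqrt 3)^m * (4*q* sqrt (real k))^k / (b powr (real m/2) * b^k)"
proof -
  have s3: "0 < sqrt (3::real)" by simp
  have sk: "0 < sqrt (real k)" using k by simp
  have e1: "(sqrt (3*b)/2)^m * (4*q/sqrt 3)^m = 2^m * q^m * (sqrt b)^m"
  proof -
    have "(sqrt (3*b)/2) * (4*q/sqrt 3) = 2 * q * sqrt b"
      using s3 by (simp add: real_sqrt_mult field_simps)
    then show ?thesis by (metis power_mult_distrib)
  qed
  have e2: "(b / (2 * sqrt (real k)))^k * (4*q* sqrt (real k))^k = 2^k * q^k * b^k"
  proof -
    have "(b / (2 * sqrt (real k))) * (4*q* sqrt (real k)) = 2 * q * b"
      using sk by (simp add: field_simps)
    then show ?thesis by (metis power_mult_distrib)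
  qed
  have sb: "(sqrt b)^m = b powr (real m/2)"
  proof -
    have "(sqrt b)^m = (b powr (1/2))^m" using b by (simp add: powr_half_sqrt)
    also have "\<dots> = b powr (real m * (1/2))" using b by (intro powr_power) simp
    finally show ?thesis by simp
  qed
  have pos1: "0 < (sqrt (3*b)/2)^m * (\<omega> / 2^m) * (b / (2 * sqrt (real k)))^k"
    using b \<omega> sk by simp
  have pos2: "0 < b powr (real m/2) * b^k" using b by simp
  have EQ: "\<omega> * 2^k * q^(m+k) * (b powr (real m/2) * b^k) =
        ((sqrt (3*b)/2)^m * (\<omega> / 2^m) * (b / (2 * sqrt (real k)))^k) * ((4*q/sqrt 3)^m * (4*q* sqrt (real k))^k)"
  proof -
    have "((sqrt (3*b)/2)^m * (\<omega> / 2^m) * (b / (2 * sqrt (real k)))^k) * ((4*q/sqrt 3)^m * (4*q* sqrt (real k))^k)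
        = ((sqrt (3*b)/2)^m * (4*q/sqrt 3)^m) * (\<omega> / 2^m) * ((b / (2 * sqrt (real k)))^k * (4*q* sqrt (real k))^k)"
      by (simp add: algebra_simps)
    also have "\<dots> = (2^m * q^m * (sqrt b)^m) * (\<omega> / 2^m) * (2^k * q^k * b^k)" by (simp only: e1 e2)
    also have "\<dots> = \<omega> * 2^k * q^(m+k) * ((sqrt b)^m * b^k)" by (simp add: power_add field_simps)
    finally show ?thesis by (simp add: sb)
  qed
  have aux: "a * d = c * bb \<Longrightarrow> c \<noteq> 0 \<Longrightarrow> d \<noteq> 0 \<Longrightarrow> a / c = bb / d" for a bb c d :: real
    by (simp add: frac_eq_eq)
  show ?thesis by (rule aux[OF EQ]) (use pos1 pos2 in auto)
qed

lemma b_powr_combine: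
  fixes b \<beta> :: real and m n :: nat
  assumes b: "0 < b" and mn: "m \<le> n"
  shows "b powr \<beta> / (b powr (real m/2) * b^(n-m)) = b powr (\<beta> + real m/2 - real n)"
proof -
  have "b^(n-m) = b powr (real (n-m))" using b by (simp add: powr_realpow)
  then have "b powr (real m/2) * b^(n-m) = b powr (real m/2 + real (n-m))" by (simp add: powr_add)
  then have "b powr \<beta> / (b powr (real m/2) * b^(n-m)) = b powr (\<beta> - (real m/2 + real (n-m)))"
    by (simp add: powr_diff)
  also have "\<beta> - (real m/2 + real (n-m)) = \<beta> + real m/2 - real n" using mn by (simp add: of_nat_diff)
  finally show ?thesis .
qed

lemma q_const: "4 * (6/5::real) / sqrt 3 \<le> 2 powr (3/2)"
proof -
  have "2 powr (3/2::real) = sqrt (2 powr 3)"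
    using powr_half_sqrt_powr[of 2 3] by simp
  also have "(2::real) powr 3 = 8"
    using powr_realpow[of 2 3] by simp
  finally have e8: "2 powr (3/2::real) = sqrt 8" .
  moreover have "4 * (6/5::real) / sqrt 3 \<le> sqrt 8"
  proof -
    have "(4 * (6/5::real) / sqrt 3)^2 = 192/25" by (simp add: power_divide)
    also have "\<dots> \<le> 8" by simp
    finally have "(4 * (6/5::real) / sqrt 3)^2 \<le> (sqrt 8)^2" by simp
    then show ?thesis by (rule power2_le_imp_le) simp
  qed
  ultimately show ?thesis by (simp only: e8)
qed

theorem mainTheorem8:
  shows "\<exists>K4' :: nat \<Rightarrow> real. \<forall>(n::nat) (m::nat) (b::real) (\<beta>::real) (\<gamma>::(nat \<Rightarrow> real) \<Rightarrow> real) (K3::real).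
    0 < b \<and> b < 1 \<and> m < n \<and> \<beta> > real n - real m / 2 \<and>
    \<gamma> \<in> borel_measurable (restrict_space (Leb n) (Eset n m)) \<and>
    (\<forall>x\<in>Eset n m. 0 \<le> \<gamma> x \<and> 1 \<le> dG n m x powr \<beta> * \<gamma> x \<and> dG n m x powr \<beta> * \<gamma> x \<le> K3)
    \<longrightarrow> (\<forall>y\<in>Eset n m.
          (\<integral>\<^sup>+ x \<in> Psi_inv n m b y. ennreal (\<gamma> x / measure (Leb n) (Psi n m b x)) \<partial>Leb n)
          \<le> ennreal (real n * 2 powr (3 * real m / 2) * K3 * K4' (n - m)
                     * b powr (\<beta> + real m / 2 - real n) / (1 - b) ^ (n - m - 1) * \<gamma> y))"
proof (intro exI[of _ "\<lambda>k. 6 * (4 * (6/5) * sqrt (real k))^k"] allI impI ballI)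
  fix n m :: nat and b \<beta> K3 :: real and \<gamma> :: "(nat \<Rightarrow> real) \<Rightarrow> real" and y
  assume H: "0 < b \<and> b < 1 \<and> m < n \<and> \<beta> > real n - real m / 2 \<and>
    \<gamma> \<in> borel_measurable (restrict_space (Leb n) (Eset n m)) \<and>
    (\<forall>x\<in>Eset n m. 0 \<le> \<gamma> x \<and> 1 \<le> dG n m x powr \<beta> * \<gamma> x \<and> dG n m x powr \<beta> * \<gamma> x \<le> K3)"
    and y: "y \<in> Eset n m"
  have b: "0 < b" "b < 1" and mn: "m < n" and \<beta>gt: "\<beta> > real n - real m / 2" using H by auto
  have h\<gamma>: "\<forall>x\<in>Eset n m. 0 \<le> \<gamma> x \<and> dG n m x powr \<beta> * \<gamma> x \<le> K3" using H by auto
  have \<beta>1: "1 \<le> \<beta>"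
  proof -
    have "real m + 1 \<le> real n" using mn by linarith
    then show ?thesis using \<beta>gt by linarith
  qed
  have \<beta>: "0 < \<beta>" using \<beta>1 by simp
  define k where "k = n - m"
  have kpos: "0 < k" using mn by (simp add: k_def)
  define \<omega> where "\<omega> = unit_ball_vol (real m)"
  have \<omega>: "0 < \<omega>" by (simp add: \<omega>_def)
  define Lc where "Lc = (sqrt (3*b)/2)^m * (\<omega> / 2^m) * (b / (2 * sqrt (real (n-m))))^(n-m)"
  have Lc: "0 < Lc" using b \<omega> mn by (simp add: Lc_def)
  have Lcb: "Lc * (NV n m x)^n \<le> measure (Leb n) (Psi n m b x)" if "x \<in> Eset n m" for x
    using Psi_measure_lb[OF mn b that] by (simp add: Lc_def \<omega>_def)
  define q :: real where "q = 6/5"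
  define \<delta> where "\<delta> = NV n m y"
  define R where "R = \<delta> / b"
  define t where "t = q powr (-\<beta>)"
  have \<delta>: "0 < \<delta>" using y by (simp add: \<delta>_def Eset_iff)
  have int: "(\<integral>\<^sup>+ x \<in> Psi_inv n m b y. ennreal (\<gamma> x / measure (Leb n) (Psi n m b x)) \<partial>Leb n)
     \<le> ennreal (K3 * R powr (-\<beta>) * \<omega> * 2^(n-m) * q^n / Lc / (1 - t))"
    using integral_bound[OF mn b \<beta> h\<gamma> y Lc Lcb] by (simp add: q_def R_def \<delta>_def t_def \<omega>_def)
  have g\<delta>: "\<delta> powr (-\<beta>) \<le> \<gamma> y"
  proof -
    have "dG n m y = \<delta>" using dG_eq[of m n y] mn y by (simp add: Eset_iff \<delta>_def)
    then have "1 \<le> \<delta> powr \<beta> * \<gamma> y" using H y by auto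
    then show ?thesis using \<delta> by (simp add: powr_minus field_simps)
  qed
  have K3: "0 \<le> K3"
  proof -
    have "0 \<le> \<gamma> y" "dG n m y powr \<beta> * \<gamma> y \<le> K3" using h\<gamma> y by auto
    then show ?thesis by (smt (verit) mult_nonneg_nonneg powr_ge_zero)
  qed
  have gy: "0 \<le> \<gamma> y" using h\<gamma> y by auto
  have Rp: "R powr (-\<beta>) = \<delta> powr (-\<beta>) * b powr \<beta>"
  proof -
    have "R powr (-\<beta>) = \<delta> powr (-\<beta>) / b powr (-\<beta>)"
      unfolding R_def using \<delta> b by (subst powr_divide) auto
    then show ?thesis by (simp add: powr_minus divide_inverse)
  qed
  define BP where "BP = b powr (\<beta> + real m / 2 - real n)"
  define M1 where "M1 = (4*q/sqrt 3)^m"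
  define K1 where "K1 = (4 * q * sqrt (real k))^k"
  define P2 where "P2 = (2::real) powr (3 * real m / 2)"
  have ratio: "\<omega> * 2^k * q^n / Lc = M1 * K1 / (b powr (real m/2) * b^k)"
  proof -
    have "n = m + k" using mn by (simp add: k_def)
    then show ?thesis unfolding Lc_def M1_def K1_def using Lc_ratio[OF b(1) kpos \<omega>, of q m]
      by (simp add: k_def)
  qed
  have bcomb: "b powr \<beta> / (b powr (real m/2) * b^k) = BP"
    unfolding BP_def k_def by (rule b_powr_combine) (use b mn in auto)
  have Xeq: "K3 * R powr (-\<beta>) * \<omega> * 2^(n-m) * q^n / Lc / (1 - t)
      = (K3 * BP * K1) * (\<delta> powr (-\<beta>) * M1 * (1 / (1 - t)))"
  proof -
    have "K3 * R powr (-\<beta>) * \<omega> * 2^(n-m) * q^n / Lc / (1 - t)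
        = K3 * \<delta> powr (-\<beta>) * b powr \<beta> * (\<omega> * 2^k * q^n / Lc) / (1 - t)"
      by (simp add: Rp k_def)
    also have "\<dots> = K3 * \<delta> powr (-\<beta>) * (b powr \<beta> / (b powr (real m/2) * b^k)) * M1 * K1 / (1 - t)"
      by (simp add: ratio)
    also have "\<dots> = (K3 * BP * K1) * (\<delta> powr (-\<beta>) * M1 * (1 / (1 - t)))"
      by (simp add: bcomb)
    finally show ?thesis .
  qed
  have M1: "M1 \<le> P2"
  proof -
    have "M1 \<le> (2 powr (3/2))^m"
      unfolding M1_def q_def by (rule power_mono[OF q_const]) simp
    also have "\<dots> = 2 powr (real m * (3/2))" by (rule powr_power) simp
    also have "\<dots> = P2" unfolding P2_def by (simp add: mult.commute)
    finally show ?thesis .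
  qed
  have M10: "0 \<le> M1" by (simp add: M1_def q_def)
  have t: "t \<le> 5/6"
  proof -
    have "q powr (-\<beta>) \<le> q powr (-1)" using \<beta>1 by (intro powr_mono) (auto simp: q_def)
    also have "q powr (-1) = 5/6" by (simp add: q_def powr_minus)
    finally show ?thesis by (simp add: t_def)
  qed
  have t6: "1 / (1 - t) \<le> 6" using t by (simp add: field_simps)
  have t0: "0 \<le> 1 / (1 - t)" using t by simp
  have inner: "\<delta> powr (-\<beta>) * M1 * (1 / (1 - t)) \<le> \<gamma> y * P2 * 6"
    using g\<delta> M1 t6 t0 M10 gy
    by (intro mult_mono) (auto intro: mult_nonneg_nonneg order_trans[OF M10 M1])
  have outer0: "0 \<le> K3 * BP * K1" using K3 b by (simp add: BP_def K1_def q_def)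
  define Y where "Y = (K3 * BP * K1) * (\<gamma> y * P2 * 6)"
  have XY: "K3 * R powr (-\<beta>) * \<omega> * 2^(n-m) * q^n / Lc / (1 - t) \<le> Y"
    unfolding Xeq Y_def by (rule mult_left_mono[OF inner outer0])
  have Y0: "0 \<le> Y" unfolding Y_def using outer0 gy by (simp add: P2_def)
  have pb: "0 < (1 - b)^(n-m-1)" "(1 - b)^(n-m-1) \<le> 1" using b by (auto intro: power_le_one)
  have "Y \<le> Y / (1 - b)^(n-m-1)" using Y0 pb by (simp add: le_divide_eq mult_left_le)
  also have "\<dots> \<le> real n * (Y / (1 - b)^(n-m-1))"
  proof -
    have n1: "1 \<le> real n" using mn by simp
    have z: "0 \<le> Y / (1 - b)^(n-m-1)" using Y0 pb by simp
    show ?thesis using mult_right_mono[OF n1 z] by simp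
  qed
  also have "real n * (Y / (1 - b)^(n-m-1)) = real n * 2 powr (3 * real m / 2) * K3 * (6 * (4 * (6/5) * sqrt (real (n - m)))^(n - m))
                     * b powr (\<beta> + real m / 2 - real n) / (1 - b) ^ (n - m - 1) * \<gamma> y"
    by (simp add: Y_def BP_def K1_def P2_def q_def k_def field_simps)
  finally have "K3 * R powr (-\<beta>) * \<omega> * 2^(n-m) * q^n / Lc / (1 - t) \<le> real n * 2 powr (3 * real m / 2) * K3 * (6 * (4 * (6/5) * sqrt (real (n - m)))^(n - m))
                     * b powr (\<beta> + real m / 2 - real n) / (1 - b) ^ (n - m - 1) * \<gamma> y"
    using XY by linarith
  then show "(\<integral>\<^sup>+ x \<in> Psi_inv n m b y. ennreal (\<gamma> x / measure (Leb n) (Psi n m b x)) \<partial>Leb n)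
          \<le> ennreal (real n * 2 powr (3 * real m / 2) * K3 * (6 * (4 * (6/5) * sqrt (real (n - m)))^(n - m))
                     * b powr (\<beta> + real m / 2 - real n) / (1 - b) ^ (n - m - 1) * \<gamma> y)"
    using int by (meson ennreal_leI order_trans)
qed

end
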